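(* Let $\mathbf{x}$ be a feasible solution of $\textsc{Node-MC-Rel}$, let $\ell$ be uniform on $\{1,\dots,k\}$ and, independently, $\theta$ uniform on $(0,1/2)$, and $C=\bigcup_{i\neq\ell}B^+(s_i,\theta)$. Then $\mathbb{E}\big[\sum_{v\in C}w_v\big]\le 2(1-1/k)\sum_{v\in V}w_vx_v$.
   Context: $G=(V,E)$ is an undirected graph with non-negative node weights $w_v$ and terminal set $S=\{s_1,\dots,s_k\}$, $k\ge2$, forming an independent set. For $i<j$, $\mathcal{P}_{ij}$ is the set of paths between $s_i$ and $s_j$. $\textsc{Node-MC-Rel}$: minimize $\sum_{v\in V\setminus S}w_vx_v$ s.t. $\sum_{v\in p}x_v\ge1$ for all $p\in\mathcal{P}_{ij}$, $i<j$ (sum over all vertices of $p$ including endpoints), $x_v=0$ for $v\in S$, $x\ge0$. $d(a,b)$ is the minimum over paths from $a$ to $b$ of the sum of $x$ over all vertices of the path including both endpoints. $B(u,r)=\{v:d(u,v)\le r\}$; $B^+(u,r)$ is the set of nodes not in $B(u,r)$ adjacent to some node of $B(u,r)$. *)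

theory Defs
  imports "HOL-Analysis.Analysis" "HOL-Library.Extended_Real"
begin

definition is_path :: "'a set \<Rightarrow> ('a \<times> 'a) set \<Rightarrow> 'a list \<Rightarrow> 'a \<Rightarrow> 'a \<Rightarrow> bool" where
  "is_path V E p a b \<longleftrightarrow> p \<noteq> [] \<and> hd p = a \<and> last p = b \<and> distinct p \<and> set p \<subseteq> V
     \<and> (\<forall>i. Suc i < length p \<longrightarrow> (p ! i, p ! Suc i) \<in> E)"

definition path_len :: "('a \<Rightarrow> real) \<Rightarrow> 'a list \<Rightarrow> real" where
  "path_len x p = sum_list (map x p)"

definition node_mc_feasible ::
  "'a set \<Rightarrow> ('a \<times> 'a) set \<Rightarrow> nat \<Rightarrow> (nat \<Rightarrow> 'a) \<Rightarrow> ('a \<Rightarrow> real) \<Rightarrow> bool" where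
  "node_mc_feasible V E k s x \<longleftrightarrow>
     (\<forall>v\<in>V. x v \<ge> 0) \<and> (\<forall>i\<in>{1..k}. x (s i) = 0) \<and>
     (\<forall>i j p. 1 \<le> i \<and> i < j \<and> j \<le> k \<and> is_path V E p (s i) (s j) \<longrightarrow> path_len x p \<ge> 1)"

text \<open>d(a,b): minimum over paths (infinite if no path exists).\<close>
definition dist_x :: "'a set \<Rightarrow> ('a \<times> 'a) set \<Rightarrow> ('a \<Rightarrow> real) \<Rightarrow> 'a \<Rightarrow> 'a \<Rightarrow> ereal" where
  "dist_x V E x a b = Inf {ereal (path_len x p) | p. is_path V E p a b}"

definition ball_x :: "'a set \<Rightarrow> ('a \<times> 'a) set \<Rightarrow> ('a \<Rightarrow> real) \<Rightarrow> 'a \<Rightarrow> real \<Rightarrow> 'a set" where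
  "ball_x V E x u r = {v \<in> V. dist_x V E x u v \<le> ereal r}"

definition ball_plus :: "'a set \<Rightarrow> ('a \<times> 'a) set \<Rightarrow> ('a \<Rightarrow> real) \<Rightarrow> 'a \<Rightarrow> real \<Rightarrow> 'a set" where
  "ball_plus V E x u r = {v \<in> V. v \<notin> ball_x V E x u r \<and> (\<exists>y\<in>ball_x V E x u r. (y, v) \<in> E)}"

definition cut_set :: "'a set \<Rightarrow> ('a \<times> 'a) set \<Rightarrow> nat \<Rightarrow> (nat \<Rightarrow> 'a) \<Rightarrow> ('a \<Rightarrow> real) \<Rightarrow> nat \<Rightarrow> real \<Rightarrow> 'a set" where
  "cut_set V E k s x l \<theta> = (\<Union>i\<in>{1..k} - {l}. ball_plus V E x (s i) \<theta>)"

end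

theory Submission
  imports Defs
begin


fun walk :: "'a set \<Rightarrow> ('a \<times> 'a) set \<Rightarrow> 'a list \<Rightarrow> bool" where
  "walk V E [] = False"
| "walk V E [a] = (a \<in> V)"
| "walk V E (a # b # r) = (a \<in> V \<and> (a, b) \<in> E \<and> walk V E (b # r))"

lemma walk_iff: "walk V E p \<longleftrightarrow> p \<noteq> [] \<and> set p \<subseteq> V \<and> (\<forall>i. Suc i < length p \<longrightarrow> (p ! i, p ! Suc i) \<in> E)"
proof (induction V E p rule: walk.induct)
  case (3 V E a b r)
  have "(\<forall>i. Suc i < length (a # b # r) \<longrightarrow> ((a # b # r) ! i, (a # b # r) ! Suc i) \<in> E)
    \<longleftrightarrow> (a, b) \<in> E \<and> (\<forall>i. Suc i < length (b # r) \<longrightarrow> ((b # r) ! i, (b # r) ! Suc i) \<in> E)"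
    (is "?L \<longleftrightarrow> ?R")
  proof
    assume L: ?L
    show ?R
    proof
      show "(a,b) \<in> E" using L[rule_format, of 0] by simp
      show "\<forall>i. Suc i < length (b # r) \<longrightarrow> ((b # r) ! i, (b # r) ! Suc i) \<in> E"
        using L by (metis Suc_less_eq length_Cons nth_Cons_Suc)
    qed
  next
    assume R: ?R
    show ?L
    proof (intro allI impI)
      fix i assume "Suc i < length (a # b # r)"
      then show "((a # b # r) ! i, (a # b # r) ! Suc i) \<in> E"
        using R by (cases i) auto
    qed
  qed
  then show ?case using 3 by auto
qed auto

lemma path_walk: "is_path V E p a b \<longleftrightarrow> walk V E p \<and> distinct p \<and> hd p = a \<and> last p = b"
  unfolding is_path_def walk_iff by auto

lemma walk_append: "walk V E (xs @ [y]) \<Longrightarrow> walk V E (y # zs) \<Longrightarrow> walk V E (xs @ y # zs)"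
proof (induction xs)
  case Nil then show ?case by simp
next
  case (Cons a xs)
  then show ?case by (cases xs) auto
qed

lemma walk_split: "walk V E (xs @ y # zs) \<Longrightarrow> walk V E (xs @ [y]) \<and> walk V E (y # zs)"
proof (induction xs)
  case Nil then show ?case by (cases zs) auto
next
  case (Cons a xs)
  then show ?case by (cases xs) auto
qed

lemma walk_rev: "sym E \<Longrightarrow> walk V E p \<Longrightarrow> walk V E (rev p)"
proof (induction V E p rule: walk.induct)
  case (3 V E a b r)
  have "walk V E (rev r @ [b])" using 3 by auto
  moreover have "b \<in> V" using 3 by (cases r) auto
  then have "walk V E [b, a]" using 3 by (auto dest: symD)
  ultimately show ?case using walk_append[of V E "rev r" b "[a]"] by simp
qed auto

lemma walk_set: "walk V E p \<Longrightarrow> set p \<subseteq> V"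
  by (simp add: walk_iff)

lemma walk_shorten:
  assumes "walk V E w" "\<forall>v\<in>V. x v \<ge> 0"
  shows "\<exists>p. is_path V E p (hd w) (last w) \<and> path_len x p \<le> path_len x w"
  using assms(1)
proof (induction w rule: length_induct)
  case (1 w)
  show ?case
  proof (cases "distinct w")
    case True then show ?thesis using 1(2) by (auto simp: path_walk)
  next
    case False
    then obtain xs ys zs y where w: "w = xs @ [y] @ ys @ [y] @ zs"
      using not_distinct_decomp by blast
    have wV: "set w \<subseteq> V" using 1(2) walk_set by blast
    have "walk V E (xs @ [y])" "walk V E (y # ys @ y # zs)"
      using walk_split[of V E xs y "ys @ y # zs"] 1(2) w by auto
    moreover have "walk V E (y # zs)"
      using walk_split[of V E "y # ys" y zs] calculation(2) by auto
    ultimately have w': "walk V E (xs @ y # zs)" by (metis walk_append)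
    have "length (xs @ y # zs) < length w" using w by simp
    then obtain p where p: "is_path V E p (hd (xs @ y # zs)) (last (xs @ y # zs))"
      "path_len x p \<le> path_len x (xs @ y # zs)"
      using 1(1) w' by blast
    have "hd (xs @ y # zs) = hd w" using w by (cases xs) auto
    moreover have "last (xs @ y # zs) = last w" using w by (cases zs) auto
    moreover have "path_len x (xs @ y # zs) \<le> path_len x w"
    proof -
      have "0 \<le> sum_list (map x (ys @ [y]))"
        using wV w assms(2) by (intro sum_list_nonneg) auto
      then show ?thesis using w by (simp add: path_len_def)
    qed
    ultimately show ?thesis using p by auto
  qed
qed

lemma paths_finite: "finite V \<Longrightarrow> finite {p. is_path V E p a b}"
  by (rule finite_subset[OF _ finite_subset_distinct[of V]]) (auto simp: is_path_def)

lemma dist_lower: "is_path V E p a b \<Longrightarrow> dist_x V E x a b \<le> ereal (path_len x p)"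
  unfolding dist_x_def by (rule Inf_lower) blast

lemma dist_empty: "\<not> (\<exists>p. is_path V E p a b) \<Longrightarrow> dist_x V E x a b = \<infinity>"
  unfolding dist_x_def by (simp add: top_ereal_def)

lemma dist_attain:
  assumes "finite V" "\<exists>p. is_path V E p a b"
  shows "\<exists>p. is_path V E p a b \<and> dist_x V E x a b = ereal (path_len x p)"
proof -
  let ?S = "{ereal (path_len x p) | p. is_path V E p a b}"
  have "?S = (\<lambda>p. ereal (path_len x p)) ` {p. is_path V E p a b}" by auto
  then have fin: "finite ?S" using paths_finite[OF assms(1)] by simp
  have ne: "?S \<noteq> {}" using assms(2) by auto
  have "Inf ?S \<in> ?S" using Min_in[OF fin ne] Min_Inf[OF fin ne] by simp
  then show ?thesis unfolding dist_x_def by auto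
qed

lemma path_prefix:
  assumes "is_path V E q a b" "v \<in> set q" "\<forall>u\<in>V. x u \<ge> 0"
  shows "\<exists>p. is_path V E p a v \<and> path_len x p \<le> path_len x q"
proof -
  obtain n where n: "n < length q" "q ! n = v" using assms(2) by (metis in_set_conv_nth)
  let ?p = "take (Suc n) q"
  have "?p \<noteq> []" using n by (cases q) auto
  then have lt: "last ?p = v" using n by (auto simp: last_conv_nth min_def nth_take intro: arg_cong[where f="(!) q"])
  have "is_path V E ?p a v"
    using assms(1) n lt unfolding is_path_def
    by (auto simp: hd_take dest: in_set_takeD)
  moreover have "path_len x ?p \<le> path_len x q"
  proof -
    have "0 \<le> sum_list (map x (drop (Suc n) q))"
      using assms(1,3) by (intro sum_list_nonneg) (auto simp: is_path_def dest!: in_set_dropD)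
    moreover have "path_len x q = path_len x ?p + sum_list (map x (drop (Suc n) q))"
      unfolding path_len_def by (metis append_take_drop_id map_append sum_list_append)
    ultimately show ?thesis by simp
  qed
  ultimately show ?thesis by blast
qed

lemma bp_interval:
  assumes fin: "finite V" and x0: "\<forall>u\<in>V. x u \<ge> 0" and v: "v \<in> ball_plus V E x a \<theta>"
  shows "\<exists>p. is_path V E p a v \<and> dist_x V E x a v = ereal (path_len x p)
           \<and> path_len x p - x v \<le> \<theta> \<and> \<theta> < path_len x p"
proof -
  from v obtain y where vV: "v \<in> V" and nb: "\<not> dist_x V E x a v \<le> ereal \<theta>"
    and yV: "y \<in> V" and dy: "dist_x V E x a y \<le> ereal \<theta>" and e: "(y, v) \<in> E"
    unfolding ball_plus_def ball_x_def by auto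
  have "\<exists>p. is_path V E p a y" using dy dist_empty by force
  then obtain q where q: "is_path V E q a y" "dist_x V E x a y = ereal (path_len x q)"
    using dist_attain[OF fin] by blast
  have ql: "path_len x q \<le> \<theta>" using q(2) dy by simp
  have vq: "v \<notin> set q"
  proof
    assume "v \<in> set q"
    then obtain p where "is_path V E p a v" "path_len x p \<le> path_len x q"
      using path_prefix[OF q(1) _ x0] by blast
    then have "dist_x V E x a v \<le> ereal \<theta>"
      using dist_lower[of V E p a v x] ql by (meson ereal_less_eq(3) order_trans)
    then show False using nb by simp
  qed
  have "walk V E q" "q \<noteq> []" "last q = y" using q(1) by (auto simp: path_walk is_path_def)
  then have "walk V E (butlast q @ [y])" by (metis append_butlast_last_id)
  moreover have "walk V E [y, v]" using yV vV e by simp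
  ultimately have "walk V E (butlast q @ y # [v])" by (metis walk_append)
  then have "walk V E (q @ [v])" using \<open>q \<noteq> []\<close> \<open>last q = y\<close>
    by (metis append_assoc append_butlast_last_id append_Cons append_Nil)
  then have qv: "is_path V E (q @ [v]) a v"
    using q(1) vq \<open>q \<noteq> []\<close> by (auto simp: path_walk is_path_def)
  then obtain p where p: "is_path V E p a v" "dist_x V E x a v = ereal (path_len x p)"
    using dist_attain[OF fin] by blast
  have "path_len x p \<le> path_len x (q @ [v])"
    using dist_lower[OF qv, of x] p(2) by simp
  then have "path_len x p - x v \<le> \<theta>" using ql by (simp add: path_len_def)
  moreover have "\<theta> < path_len x p" using nb p(2) by simp
  ultimately show ?thesis using p by blast
qed

lemma pair_bound:
  assumes fin: "finite V" and symE: "sym E" and x0: "\<forall>u\<in>V. x u \<ge> 0"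
    and feas: "node_mc_feasible V E k s x"
    and ij: "i \<in> {1..k}" "j \<in> {1..k}" "i \<noteq> j" and inj: "inj_on s {1..k}"
    and qi: "is_path V E qi (s i) v" and qj: "is_path V E qj (s j) v"
  shows "1 \<le> path_len x qi + path_len x qj - x v"
proof -
  have wi: "walk V E qi" "qi \<noteq> []" "last qi = v" "hd qi = s i" using qi by (auto simp: path_walk is_path_def)
  have wj: "walk V E (rev qj)" "rev qj \<noteq> []" "hd (rev qj) = v" "last (rev qj) = s j"
    using qj walk_rev[OF symE] by (auto simp: path_walk is_path_def hd_rev last_rev)
  have rj: "rev qj = v # tl (rev qj)" using wj by (metis list.collapse)
  have "walk V E (butlast qi @ [v])" using wi by (metis append_butlast_last_id)
  moreover have "walk V E (v # tl (rev qj))" using wj rj by metis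
  ultimately have "walk V E (butlast qi @ v # tl (rev qj))" by (metis walk_append)
  moreover have eqw: "butlast qi @ v # tl (rev qj) = qi @ tl (rev qj)"
    using wi by (metis append_Cons append_Nil append_assoc append_butlast_last_id)
  ultimately have w: "walk V E (qi @ tl (rev qj))" by simp
  have hw: "hd (qi @ tl (rev qj)) = s i" using wi by simp
  have lw: "last (qi @ tl (rev qj)) = s j"
  proof (cases "tl (rev qj) = []")
    case True
    then have "rev qj = [v]" using rj by simp
    then have "s j = v" using wj by simp
    then show ?thesis using True wi by simp
  next
    case False
    then show ?thesis using wj rj by (metis last_appendR last_ConsR)
  qed
  obtain p where p: "is_path V E p (s i) (s j)" "path_len x p \<le> path_len x (qi @ tl (rev qj))"
    using walk_shorten[OF w x0] hw lw by auto
  have lenw: "path_len x (qi @ tl (rev qj)) = path_len x qi + path_len x qj - x v"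
  proof -
    have "path_len x qj = path_len x (rev qj)" by (simp add: path_len_def sum_list_rev rev_map[symmetric])
    also have "\<dots> = x v + sum_list (map x (tl (rev qj)))" by (subst rj) (simp add: path_len_def)
    finally show ?thesis by (simp add: path_len_def)
  qed
  have "1 \<le> path_len x p"
  proof (cases "i < j")
    case True
    then show ?thesis using feas p(1) ij unfolding node_mc_feasible_def by auto
  next
    case False
    then have "j < i" using ij by simp
    have "walk V E (rev p)" using p(1) walk_rev[OF symE] by (auto simp: path_walk)
    then have "is_path V E (rev p) (s j) (s i)" using p(1)
      by (auto simp: path_walk is_path_def hd_rev last_rev)
    then have "1 \<le> path_len x (rev p)"
      using feas \<open>j < i\<close> ij unfolding node_mc_feasible_def by auto
    then show ?thesis by (simp add: path_len_def sum_list_rev rev_map[symmetric])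
  qed
  then show ?thesis using p(2) lenw by simp
qed



lemma ex_argmin:
  fixes e :: "nat \<Rightarrow> real"
  assumes "finite N" "N \<noteq> {}"
  shows "\<exists>i\<in>N. \<forall>j\<in>N. e i \<le> e j"
proof -
  have "Min (e ` N) \<in> e ` N" using assms by simp
  then obtain i where "i \<in> N" "e i = Min (e ` N)" by auto
  then show ?thesis using assms by (metis Min_le finite_imageI imageI)
qed

lemma measure_le_Ico:
  fixes a b :: real
  assumes "B \<in> sets lborel" "B \<subseteq> {a..<b}" "a \<le> b"
  shows "measure lborel B \<le> b - a"
proof -
  have "{a..<b} \<in> fmeasurable lborel" using assms(3) by (simp add: fmeasurable_def)
  then have "measure lborel B \<le> measure lborel {a..<b}"
    using measure_mono_fmeasurable assms by blast
  then show ?thesis using assms by simp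
qed

lemma abstract_bound:
  fixes A :: "nat \<Rightarrow> real set" and e :: "nat \<Rightarrow> real" and x :: real
  assumes I: "finite I" "card I \<ge> 1"
    and meas: "\<And>i. i \<in> I \<Longrightarrow> A i \<in> sets lborel"
    and half: "\<And>i. i \<in> I \<Longrightarrow> A i \<subseteq> {..<1/2}"
    and iv: "\<And>i. i \<in> I \<Longrightarrow> A i \<subseteq> {e i..<e i + x}"
    and pair: "\<And>i j. i \<in> I \<Longrightarrow> j \<in> I \<Longrightarrow> i \<noteq> j \<Longrightarrow> A i \<noteq> {} \<Longrightarrow> A j \<noteq> {} \<Longrightarrow> 1 \<le> e i + e j + x"
    and x0: "0 \<le> x"
  shows "(\<Sum>l\<in>I. measure lborel (\<Union>i\<in>I - {l}. A i)) \<le> (real (card I) - 1) * x"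
proof -
  define N where "N = {i\<in>I. A i \<noteq> {}}"
  have finN: "finite N" using I by (simp add: N_def)
  have U: "(\<Union>i\<in>I - {l}. A i) = (\<Union>i\<in>N - {l}. A i)" for l by (auto simp: N_def)
  have mU: "(\<Union>i\<in>N - {l}. A i) \<in> sets lborel" for l
    using meas finN by (auto simp: N_def)
  have eh: "e i \<le> 1/2" if iN: "i \<in> N" for i
  proof -
    obtain t where "t \<in> A i" using iN unfolding N_def by auto
    then show ?thesis using iv[of i] half[of i] iN by (force simp: N_def)
  qed
  consider "N = {}" | i0 where "N = {i0}" | "card N \<ge> 2"
    by (metis One_nat_def card_1_singletonE card_0_eq finN less_2_cases_iff linorder_not_le)
  then show ?thesis
  proof cases
    case 1
    then have e: "(\<Union>i\<in>I - {l}. A i) = {}" for l using U by simp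
    have "0 \<le> (real (card I) - 1) * x" using I x0 by simp
    then show ?thesis by (simp only: e) simp
  next
    case 2
    then have i0: "i0 \<in> I" by (auto simp: N_def)
    have "measure lborel (\<Union>i\<in>I - {l}. A i) \<le> (if l = i0 then 0 else x)" if "l \<in> I" for l
    proof (cases "l = i0")
      case True then show ?thesis using U 2 by simp
    next
      case False
      then have "(\<Union>i\<in>I - {l}. A i) = A i0" using U 2 by auto
      then show ?thesis using measure_le_Ico[OF meas[OF i0] iv[OF i0]] x0 False by simp
    qed
    then have "(\<Sum>l\<in>I. measure lborel (\<Union>i\<in>I - {l}. A i)) \<le> (\<Sum>l\<in>I. (if l = i0 then 0 else x))"
      by (rule sum_mono)
    also have "\<dots> = (\<Sum>l\<in>I - {i0}. x)"
      using I(1) i0 by (simp add: sum.If_cases Diff_eq)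
    also have "\<dots> = (real (card I) - 1) * x" using I i0 by (simp add: of_nat_diff)
    finally show ?thesis .
  next
    case 3
    then have "N \<noteq> {}" by auto
    then obtain i1 where i1: "i1 \<in> N" "\<forall>j\<in>N. e i1 \<le> e j" using ex_argmin[OF finN] by blast
    have "card (N - {i1}) \<ge> 1" using 3 i1 finN by (simp add: card_Diff_singleton)
    then have "N - {i1} \<noteq> {}" by (metis card.empty not_one_le_zero)
    then obtain i2 where i2: "i2 \<in> N - {i1}" "\<forall>j\<in>N - {i1}. e i2 \<le> e j"
      using ex_argmin[of "N - {i1}"] finN by blast
    have cI: "card I \<ge> 2" using 3 card_mono[OF I(1), of N] by (auto simp: N_def)
    have i1I: "i1 \<in> I" using i1 by (auto simp: N_def)
    have bnd: "measure lborel (\<Union>i\<in>I - {l}. A i) \<le> (if l = i1 then 1/2 - e i2 else 1/2 - e i1)" if "l \<in> I" for l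
    proof (cases "l = i1")
      case True
      have "(\<Union>i\<in>N - {l}. A i) \<subseteq> {e i2..<1/2}"
      proof
        fix t assume "t \<in> (\<Union>i\<in>N - {l}. A i)"
        then obtain i where "i \<in> N - {i1}" "t \<in> A i" using True by auto
        then show "t \<in> {e i2..<1/2}" using iv[of i] half[of i] i2 by (force simp: N_def)
      qed
      then show ?thesis using measure_le_Ico[OF mU] eh[of i2] i2 True U by simp
    next
      case False
      have "(\<Union>i\<in>N - {l}. A i) \<subseteq> {e i1..<1/2}"
      proof
        fix t assume "t \<in> (\<Union>i\<in>N - {l}. A i)"
        then obtain i where "i \<in> N" "t \<in> A i" by auto
        then show "t \<in> {e i1..<1/2}" using iv[of i] half[of i] i1 by (force simp: N_def)
      qed
      then show ?thesis using measure_le_Ico[OF mU] eh[of i1] i1 False U by simp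
    qed
    then have "(\<Sum>l\<in>I. measure lborel (\<Union>i\<in>I - {l}. A i))
        \<le> (\<Sum>l\<in>I. (if l = i1 then 1/2 - e i2 else 1/2 - e i1))"
      by (rule sum_mono)
    also have "\<dots> = (1/2 - e i2) + (\<Sum>l\<in>I - {i1}. 1/2 - e i1)"
      using I(1) i1I by (simp add: sum.If_cases Diff_eq)
    also have "\<dots> = (1/2 - e i2) + (real (card I) - 1) * (1/2 - e i1)"
      using I i1I by (simp add: of_nat_diff)
    also have "\<dots> \<le> (real (card I) - 1) * x"
    proof -
      have p: "1 \<le> e i1 + e i2 + x"
        using pair[of i1 i2] i1 i2 by (auto simp: N_def)
      have t0: "0 \<le> 1/2 - e i2" using eh i2 by simp
      define c where "c = real (card I) - 1"
      have c1: "c \<ge> 1" using cI by (simp add: c_def)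
      have h1: "c * (1/2 - e i1) \<le> c * (x - (1/2 - e i2))"
        using p c1 by (intro mult_left_mono) auto
      have h2: "(c - 1) * (1/2 - e i2) \<ge> 0" using t0 c1 by simp
      have "(1/2 - e i2) + c * (1/2 - e i1) \<le> c * x"
        using h1 h2 by (simp add: right_diff_distrib left_diff_distrib)
      then show ?thesis by (simp add: c_def)
    qed
    finally show ?thesis .
  qed
qed



lemma meas_bp:
  assumes "finite V"
  shows "{\<theta>::real. v \<in> ball_plus V E x a \<theta>} \<in> sets lborel"
proof -
  have eq: "{\<theta>::real. v \<in> ball_plus V E x a \<theta>} = {\<theta> \<in> space borel. v \<in> V \<and> \<not> (dist_x V E x a v \<le> ereal \<theta>)
      \<and> (\<exists>y\<in>V. dist_x V E x a y \<le> ereal \<theta> \<and> (y, v) \<in> E)}"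
    unfolding ball_plus_def ball_x_def by auto
  have "Measurable.pred borel (\<lambda>\<theta>::real. v \<in> V \<and> \<not> (dist_x V E x a v \<le> ereal \<theta>)
      \<and> (\<exists>y\<in>V. dist_x V E x a y \<le> ereal \<theta> \<and> (y, v) \<in> E))"
    using assms by measurable
  then show ?thesis unfolding eq pred_def by simp
qed

lemma cut_eq: "{\<theta>. v \<in> cut_set V E k s x l \<theta>} = (\<Union>i\<in>{1..k} - {l}. {\<theta>. v \<in> ball_plus V E x (s i) \<theta>})"
  unfolding cut_set_def by auto

lemma meas_cut:
  assumes "finite V"
  shows "{0<..<1/2} \<inter> {\<theta>::real. v \<in> cut_set V E k s x l \<theta>} \<in> sets lborel"
  unfolding cut_eq using meas_bp[OF assms] by auto

lemma vertex_bound: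
  assumes fin: "finite V" and symE: "sym E" and x0: "\<forall>u\<in>V. x u \<ge> 0"
    and feas: "node_mc_feasible V E k s x" and k2: "k \<ge> 2" and inj: "inj_on s {1..k}"
    and vV: "v \<in> V"
  shows "(\<Sum>l\<in>{1..k}. measure lborel ({0<..<1/2} \<inter> {\<theta>::real. v \<in> cut_set V E k s x l \<theta>}))
         \<le> (real k - 1) * x v"
proof -
  define A where "A i = {0<..<1/2} \<inter> {\<theta>::real. v \<in> ball_plus V E x (s i) \<theta>}" for i
  define e where "e i = real_of_ereal (dist_x V E x (s i) v) - x v" for i
  have eqT: "{0<..<1/2} \<inter> {\<theta>::real. v \<in> cut_set V E k s x l \<theta>} = (\<Union>i\<in>{1..k} - {l}. A i)" for l
    unfolding cut_eq A_def by auto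
  have key: "\<exists>p. is_path V E p (s i) v \<and> path_len x p = e i + x v \<and> e i \<le> t \<and> t < e i + x v"
    if tA: "t \<in> A i" for i t
  proof -
    obtain p where p: "is_path V E p (s i) v" "dist_x V E x (s i) v = ereal (path_len x p)"
      "path_len x p - x v \<le> t" "t < path_len x p"
      using bp_interval[OF fin x0, where a="s i" and \<theta>=t and v=v and E=E] tA by (auto simp: A_def)
    then show ?thesis by (auto simp: e_def)
  qed
  have "(\<Sum>l\<in>{1..k}. measure lborel (\<Union>i\<in>{1..k} - {l}. A i)) \<le> (real (card {1..k}) - 1) * x v"
  proof (rule abstract_bound)
    show "finite {1..k}" by simp
    show "card {1..k} \<ge> 1" using k2 by simp
    show "A i \<in> sets lborel" for i unfolding A_def using meas_bp[OF fin] by auto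
    show "A i \<subseteq> {..<1/2}" for i by (auto simp: A_def)
    show "A i \<subseteq> {e i..<e i + x v}" for i using key by fastforce
    show "0 \<le> x v" using x0 vV by simp
    fix i j assume ij: "i \<in> {1..k}" "j \<in> {1..k}" "i \<noteq> j" "A i \<noteq> {}" "A j \<noteq> {}"
    then obtain t t' where "t \<in> A i" "t' \<in> A j" by blast
    then obtain p q where "is_path V E p (s i) v" "path_len x p = e i + x v"
      "is_path V E q (s j) v" "path_len x q = e j + x v"
      using key by meson
    then show "1 \<le> e i + e j + x v"
      using pair_bound[OF fin symE x0 feas ij(1-3) inj, of p v q] by simp
  qed
  then show ?thesis unfolding eqT by simp
qed



lemma cut_subset: "cut_set V E k s x l \<theta> \<subseteq> V"
  unfolding cut_set_def ball_plus_def by auto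

lemma integral_cut:
  assumes fin: "finite V"
  shows "(LINT \<theta>:{0<..<1/2}|lborel. (\<Sum>v\<in>cut_set V E k s x l \<theta>. w v))
    = (\<Sum>v\<in>V. w v * measure lborel ({0<..<1/2} \<inter> {\<theta>::real. v \<in> cut_set V E k s x l \<theta>}))"
proof -
  define T where "T v = {0<..<1/2} \<inter> {\<theta>::real. v \<in> cut_set V E k s x l \<theta>}" for v
  have mT: "T v \<in> sets lborel" for v unfolding T_def by (rule meas_cut[OF fin])
  have fT: "emeasure lborel (T v) < \<infinity>" for v
  proof -
    have "emeasure lborel (T v) \<le> emeasure lborel {0..(1::real)}"
      by (rule emeasure_mono) (auto simp: T_def)
    also have "\<dots> < \<infinity>" by simp
    finally show ?thesis .
  qed
  have pw: "indicator {0<..<1/2} \<theta> *\<^sub>R (\<Sum>v\<in>cut_set V E k s x l \<theta>. w v)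
      = (\<Sum>v\<in>V. w v * indicator (T v) \<theta>)" for \<theta> :: real
  proof -
    have "(\<Sum>v\<in>cut_set V E k s x l \<theta>. w v) = (\<Sum>v\<in>V. if v \<in> cut_set V E k s x l \<theta> then w v else 0)"
      using sum.inter_restrict[OF fin, of w "cut_set V E k s x l \<theta>"] cut_subset[of V E k s x l \<theta>]
      by (simp add: Int_absorb1 Int_commute)
    then show ?thesis
      by (auto simp: T_def indicator_def sum_distrib_left intro!: sum.cong)
  qed
  have "(LINT \<theta>:{0<..<1/2}|lborel. (\<Sum>v\<in>cut_set V E k s x l \<theta>. w v))
      = integral\<^sup>L lborel (\<lambda>\<theta>. \<Sum>v\<in>V. w v * indicator (T v) \<theta>)"
    unfolding set_lebesgue_integral_def pw by simp
  also have "\<dots> = (\<Sum>v\<in>V. integral\<^sup>L lborel (\<lambda>\<theta>. w v * indicator (T v) \<theta>))"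
    by (rule Bochner_Integration.integral_sum[where f="\<lambda>v \<theta>. w v * indicator (T v) \<theta>"])
       (rule integrable_mult_right[OF integrable_real_indicator[OF mT fT]])
  also have "\<dots> = (\<Sum>v\<in>V. w v * measure lborel (T v))"
    by simp
  finally show ?thesis unfolding T_def .
qed

theorem mainTheorem11:
  fixes V :: "'a set" and E :: "('a \<times> 'a) set" and w x :: "'a \<Rightarrow> real"
    and k :: nat and s :: "nat \<Rightarrow> 'a"
  assumes "finite V"
    and "sym E" and "irrefl E" and "E \<subseteq> V \<times> V"
    and "\<forall>v\<in>V. w v \<ge> 0"
    and "k \<ge> 2"
    and "inj_on s {1..k}" and "s ` {1..k} \<subseteq> V"
    and "\<forall>i\<in>{1..k}. \<forall>j\<in>{1..k}. (s i, s j) \<notin> E"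
    and "node_mc_feasible V E k s x"
  shows "(1 / real k) * (\<Sum>l\<in>{1..k}.
            2 * (LINT \<theta>:{0<..<1/2}|lborel. (\<Sum>v\<in>cut_set V E k s x l \<theta>. w v)))
         \<le> 2 * (1 - 1 / real k) * (\<Sum>v\<in>V. w v * x v)"
proof -
  define m where "m l v = measure lborel ({0<..<1/2} \<inter> {\<theta>::real. v \<in> cut_set V E k s x l \<theta>})" for l v
  have x0: "\<forall>u\<in>V. x u \<ge> 0" using assms(10) by (simp add: node_mc_feasible_def)
  have "(1 / real k) * (\<Sum>l\<in>{1..k}.
            2 * (LINT \<theta>:{0<..<1/2}|lborel. (\<Sum>v\<in>cut_set V E k s x l \<theta>. w v)))
      = (2 / real k) * (\<Sum>v\<in>V. w v * (\<Sum>l\<in>{1..k}. m l v))"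
    unfolding integral_cut[OF assms(1)] m_def
    by (simp add: sum_distrib_left sum_distrib_right mult.assoc mult.left_commute, rule sum.swap)
  also have "\<dots> \<le> (2 / real k) * (\<Sum>v\<in>V. w v * ((real k - 1) * x v))"
  proof (rule mult_left_mono[OF sum_mono])
    fix v assume "v \<in> V"
    then show "w v * (\<Sum>l\<in>{1..k}. m l v) \<le> w v * ((real k - 1) * x v)"
      using vertex_bound[OF assms(1,2) x0 assms(10,6,7)] assms(5)
      by (auto simp: m_def intro!: mult_left_mono)
  qed simp
  also have "\<dots> = 2 * (1 - 1 / real k) * (\<Sum>v\<in>V. w v * x v)"
  proof -
    have "(\<Sum>v\<in>V. w v * ((real k - 1) * x v)) = (real k - 1) * (\<Sum>v\<in>V. w v * x v)"
      by (simp add: sum_distrib_left mult.left_commute)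
    then show ?thesis using assms(6) by (simp add: field_simps)
  qed
  finally show ?thesis .
qed


end
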